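(* Let $X$ be a normal ballean and $f:X\to Y$ an open macro-uniform map onto a ballean $Y$ that admits a bornologous section $s:Y\to X$ (i.e. $f(s(y))=y$ for all $y\in Y$). Then $Y$ is normal.
   Context: A ballean is a pair $(X,\mathcal E_X)$ where $X$ is a set and $\mathcal E_X$ is a family of subsets of $X\times X$ (entourages) such that: each $E\in\mathcal E_X$ contains the diagonal; for any $E,F\in\mathcal E_X$ there is $D\in\mathcal E_X$ with $E\circ F^{-1}\subset D$; and $\bigcup\mathcal E_X=X\times X$. For $E\in\mathcal E_X$, $x\in X$, $A\subset X$: $E[x]=\{y:(x,y)\in E\}$, $E[A]=\bigcup_{a\in A}E[a]$. $B\subset X$ is bounded if $B\subset E[x]$ for some $E\in\mathcal E_X$, $x\in X$; $\mathcal B_X$ is the family of bounded sets. Sets $A,B$ are asymptotically disjoint if $E[A]\cap E[B]\in\mathcal B_X$ for all $E\in\mathcal E_X$; $U$ is an asymptotic neighborhood of $A$ if $E[A]\setminus U\in\mathcal B_X$ for all $E$; $X$ is normal if any two asymptotically disjoint sets have disjoint asymptotic neighborhoods. A map $f:X\to Y$ is macro-uniform if for every $E_X\in\mathcal E_X$ there is $E_Y\in\mathcal E_Y$ with $f(E_X[x])\subset E_Y[f(x)]$ for all $x\in X$; open if for every $E_Y\in\mathcal E_Y$ there is $E_X\in\mathcal E_X$ with $f(E_X[x])\supset E_Y[f(x)]$ for all $x\in X$. A map $s:Y\to X$ is bornologous if $s(B)$ is bounded in $X$ for every bounded $B\subset Y$. *)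

theory Defs
  imports Main
begin

text \<open>A ballean is a carrier set X with a family of entourages (subsets of X x X).
  For an entourage e, e[x] is e `` {x} and e[A] is e `` A.\<close>

definition ballean :: "'a set \<Rightarrow> ('a \<times> 'a) set set \<Rightarrow> bool" where
  "ballean X \<E> \<longleftrightarrow>
     (\<forall>e\<in>\<E>. Id_on X \<subseteq> e \<and> e \<subseteq> X \<times> X) \<and>
     (\<forall>e\<in>\<E>. \<forall>f\<in>\<E>. \<exists>d\<in>\<E>. e O converse f \<subseteq> d) \<and>
     \<Union>\<E> = X \<times> X"

definition bounded_in :: "'a set \<Rightarrow> ('a \<times> 'a) set set \<Rightarrow> 'a set \<Rightarrow> bool" where
  "bounded_in X \<E> B \<longleftrightarrow> (\<exists>e\<in>\<E>. \<exists>x\<in>X. B \<subseteq> e `` {x})"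

definition asymp_disjoint :: "'a set \<Rightarrow> ('a \<times> 'a) set set \<Rightarrow> 'a set \<Rightarrow> 'a set \<Rightarrow> bool" where
  "asymp_disjoint X \<E> A B \<longleftrightarrow> (\<forall>e\<in>\<E>. bounded_in X \<E> (e `` A \<inter> e `` B))"

definition asymp_nbhd :: "'a set \<Rightarrow> ('a \<times> 'a) set set \<Rightarrow> 'a set \<Rightarrow> 'a set \<Rightarrow> bool" where
  "asymp_nbhd X \<E> U A \<longleftrightarrow> (\<forall>e\<in>\<E>. bounded_in X \<E> (e `` A - U))"

definition normal_ballean :: "'a set \<Rightarrow> ('a \<times> 'a) set set \<Rightarrow> bool" where
  "normal_ballean X \<E> \<longleftrightarrow>
     (\<forall>A B. A \<subseteq> X \<longrightarrow> B \<subseteq> X \<longrightarrow> asymp_disjoint X \<E> A B \<longrightarrow>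
        (\<exists>U V. U \<subseteq> X \<and> V \<subseteq> X \<and> asymp_nbhd X \<E> U A \<and> asymp_nbhd X \<E> V B \<and> U \<inter> V = {}))"

definition macro_uniform ::
  "'a set \<Rightarrow> ('a \<times> 'a) set set \<Rightarrow> 'b set \<Rightarrow> ('b \<times> 'b) set set \<Rightarrow> ('a \<Rightarrow> 'b) \<Rightarrow> bool" where
  "macro_uniform X \<E>X Y \<E>Y f \<longleftrightarrow>
     (\<forall>ex\<in>\<E>X. \<exists>ey\<in>\<E>Y. \<forall>x\<in>X. f ` (ex `` {x}) \<subseteq> ey `` {f x})"

definition open_map ::
  "'a set \<Rightarrow> ('a \<times> 'a) set set \<Rightarrow> 'b set \<Rightarrow> ('b \<times> 'b) set set \<Rightarrow> ('a \<Rightarrow> 'b) \<Rightarrow> bool" where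
  "open_map X \<E>X Y \<E>Y f \<longleftrightarrow>
     (\<forall>ey\<in>\<E>Y. \<exists>ex\<in>\<E>X. \<forall>x\<in>X. ey `` {f x} \<subseteq> f ` (ex `` {x}))"

definition bornologous ::
  "'b set \<Rightarrow> ('b \<times> 'b) set set \<Rightarrow> 'a set \<Rightarrow> ('a \<times> 'a) set set \<Rightarrow> ('b \<Rightarrow> 'a) \<Rightarrow> bool" where
  "bornologous Y \<E>Y X \<E>X s \<longleftrightarrow>
     (\<forall>B. B \<subseteq> Y \<longrightarrow> bounded_in Y \<E>Y B \<longrightarrow> bounded_in X \<E>X (s ` B))"

end

theory Submission
  imports Defs
begin

lemma ball_sub: "ballean X E \<Longrightarrow> e \<in> E \<Longrightarrow> e \<subseteq> X \<times> X"
  unfolding ballean_def by blast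

lemma ball_id: "ballean X E \<Longrightarrow> e \<in> E \<Longrightarrow> x \<in> X \<Longrightarrow> (x,x) \<in> e"
  unfolding ballean_def Id_on_def by blast

lemma ball_conv: assumes "ballean X E" "e \<in> E" shows "\<exists>d\<in>E. converse e \<subseteq> d"
proof -
  have "\<forall>e\<in>E. \<forall>f\<in>E. \<exists>d\<in>E. e O converse f \<subseteq> d" using assms(1) unfolding ballean_def by (elim conjE)
  then obtain d where d: "d \<in> E" "e O converse e \<subseteq> d" using assms(2) by blast
  have "converse e \<subseteq> d"
  proof
    fix p assume "p \<in> converse e"
    then obtain a b where p: "p = (a,b)" "(b,a) \<in> e" by (cases p) auto
    have "(b,a) \<in> X \<times> X" using p(2) ball_sub[OF assms] by blast
    hence "a \<in> X" by simp
    hence "(a,a) \<in> e" using ball_id[OF assms] by simp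
    hence "(a,b) \<in> e O converse e" using p(2) by blast
    thus "p \<in> d" using d(2) p(1) by (simp add: subsetD)
  qed
  thus ?thesis using d(1) by blast
qed

lemma ball_comp: assumes "ballean X E" "e1 \<in> E" "e2 \<in> E" shows "\<exists>d\<in>E. e1 O e2 \<subseteq> d"
proof -
  obtain c where c: "c \<in> E" "converse e2 \<subseteq> c" using ball_conv[OF assms(1,3)] by blast
  have "\<forall>e\<in>E. \<forall>f\<in>E. \<exists>d\<in>E. e O converse f \<subseteq> d" using assms(1) unfolding ballean_def by (elim conjE)
  then obtain d where d: "d \<in> E" "e1 O converse c \<subseteq> d" using assms(2) c(1) by blast
  have "e2 \<subseteq> converse c" using c(2) by auto
  hence "e1 O e2 \<subseteq> e1 O converse c" by (rule relcomp_mono[OF order_refl])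
  thus ?thesis using d by blast
qed

lemma bnd_mono: "bounded_in X E B \<Longrightarrow> C \<subseteq> B \<Longrightarrow> bounded_in X E C"
  unfolding bounded_in_def by (meson subset_trans)

lemma bnd_nbhd: assumes "ballean X E" "bounded_in X E B" "e \<in> E" shows "bounded_in X E (e `` B)"
proof -
  obtain g x where g: "g \<in> E" "x \<in> X" "B \<subseteq> g `` {x}" using assms(2) unfolding bounded_in_def by blast
  obtain d where d: "d \<in> E" "g O e \<subseteq> d" using ball_comp[OF assms(1) g(1) assms(3)] by blast
  have "e `` B \<subseteq> d `` {x}" using g(3) d(2) by blast
  thus ?thesis unfolding bounded_in_def using d(1) g(2) by blast
qed

lemma bnd_image: assumes "macro_uniform X EXX Y EYY f" "f ` X = Y" "bounded_in X EXX B"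
  shows "bounded_in Y EYY (f ` B)"
proof -
  obtain g x where g: "g \<in> EXX" "x \<in> X" "B \<subseteq> g `` {x}" using assms(3) unfolding bounded_in_def by blast
  obtain ey where ey: "ey \<in> EYY" "\<forall>x\<in>X. f ` (g `` {x}) \<subseteq> ey `` {f x}"
    using assms(1) g(1) unfolding macro_uniform_def by blast
  have "f ` B \<subseteq> ey `` {f x}" using ey(2) g(2,3) by blast
  moreover have "f x \<in> Y" using assms(2) g(2) by blast
  ultimately show ?thesis unfolding bounded_in_def using ey(1) by blast
qed

theorem proposition2p5:
  fixes X :: "'a set" and EntX :: "('a \<times> 'a) set set"
    and Y :: "'b set" and EntY :: "('b \<times> 'b) set set"
    and f :: "'a \<Rightarrow> 'b" and s :: "'b \<Rightarrow> 'a"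
  assumes "ballean X EntX" and "ballean Y EntY"
    and "normal_ballean X EntX"
    and "f ` X = Y"
    and "macro_uniform X EntX Y EntY f"
    and "open_map X EntX Y EntY f"
    and "s ` Y \<subseteq> X" and "\<forall>y\<in>Y. f (s y) = y"
    and "bornologous Y EntY X EntX s"
  shows "normal_ballean Y EntY"
  unfolding normal_ballean_def
proof (intro allI impI)
  fix A B assume AY: "A \<subseteq> Y" and BY: "B \<subseteq> Y" and AB: "asymp_disjoint Y EntY A B"
  define B' where "B' = {x\<in>X. f x \<in> B}"
  have sAX: "s ` A \<subseteq> X" using AY assms(7) by blast
  have B'X: "B' \<subseteq> X" unfolding B'_def by blast
  have dis: "asymp_disjoint X EntX (s ` A) B'"
    unfolding asymp_disjoint_def
  proof
    fix e assume e: "e \<in> EntX"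
    have "\<forall>e\<in>EntX. \<forall>f\<in>EntX. \<exists>d\<in>EntX. e O converse f \<subseteq> d" using assms(1) unfolding ballean_def by (elim conjE)
    then obtain d where d: "d \<in> EntX" "e O converse e \<subseteq> d" using e by blast
    have "\<forall>ex\<in>EntX. \<exists>ey\<in>EntY. \<forall>x\<in>X. f ` (ex `` {x}) \<subseteq> ey `` {f x}"
      using assms(5) unfolding macro_uniform_def .
    then obtain ey where ey: "ey \<in> EntY" "\<forall>x\<in>X. f ` (d `` {x}) \<subseteq> ey `` {f x}"
      using d(1) by blast
    obtain ey2 where ey2: "ey2 \<in> EntY" "converse ey \<subseteq> ey2" using ball_conv[OF assms(2) ey(1)] by blast
    define C where "C = ey2 `` A \<inter> ey2 `` B"
    have Cb: "bounded_in Y EntY C" using AB ey2(1) unfolding asymp_disjoint_def C_def by blast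
    have "bounded_in Y EntY (A \<inter> C)" using bnd_mono[OF Cb] by blast
    hence sb: "bounded_in X EntX (s ` (A \<inter> C))" using assms(9) AY unfolding bornologous_def by blast
    have "e `` (s ` A) \<inter> e `` B' \<subseteq> e `` (s ` (A \<inter> C))"
    proof
      fix z assume "z \<in> e `` (s ` A) \<inter> e `` B'"
      then obtain a b where ab: "a \<in> A" "b \<in> B'" "(s a, z) \<in> e" "(b, z) \<in> e" by blast
      have "(s a, b) \<in> e O converse e" using ab(3,4) by blast
      hence "(s a, b) \<in> d" using d(2) by (rule subsetD[rotated])
      hence "f b \<in> f ` (d `` {s a})" by blast
      moreover have "s a \<in> X" using ab sAX by blast
      hence "f ` (d `` {s a}) \<subseteq> ey `` {f (s a)}" using ey(2) by blast
      ultimately have "f b \<in> ey `` {f (s a)}" by (rule subsetD[rotated])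
      moreover have "f (s a) = a" using ab AY assms(8) by auto
      ultimately have "(a, f b) \<in> ey" by simp
      hence "(f b, a) \<in> ey2" using ey2 by blast
      moreover have "(a, a) \<in> ey2" using ball_id[OF assms(2) ey2(1)] ab AY by blast
      moreover have "f b \<in> B" using ab unfolding B'_def by blast
      ultimately have "a \<in> C" using ab unfolding C_def by blast
      thus "z \<in> e `` (s ` (A \<inter> C))" using ab by blast
    qed
    thus "bounded_in X EntX (e `` (s ` A) \<inter> e `` B')"
      by (rule bnd_mono[OF bnd_nbhd[OF assms(1) sb e]])
  qed
  obtain U V where UV: "U \<subseteq> X" "V \<subseteq> X" "asymp_nbhd X EntX U (s ` A)"
      "asymp_nbhd X EntX V B'" "U \<inter> V = {}"
  proof -
    have "\<forall>A B. A \<subseteq> X \<longrightarrow> B \<subseteq> X \<longrightarrow> asymp_disjoint X EntX A B \<longrightarrow>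
        (\<exists>U V. U \<subseteq> X \<and> V \<subseteq> X \<and> asymp_nbhd X EntX U A \<and> asymp_nbhd X EntX V B \<and> U \<inter> V = {})"
      using assms(3) unfolding normal_ballean_def .
    hence "\<exists>U V. U \<subseteq> X \<and> V \<subseteq> X \<and> asymp_nbhd X EntX U (s ` A) \<and> asymp_nbhd X EntX V B' \<and> U \<inter> V = {}"
      using sAX B'X dis by simp
    thus ?thesis using that by blast
  qed
  have n1: "asymp_nbhd Y EntY (f ` U) A"
    unfolding asymp_nbhd_def
  proof
    fix ey assume ey: "ey \<in> EntY"
    obtain ex where ex: "ex \<in> EntX" "\<forall>x\<in>X. ey `` {f x} \<subseteq> f ` (ex `` {x})"
      using assms(6) ey unfolding open_map_def by blast
    have "ey `` A - f ` U \<subseteq> f ` (ex `` (s ` A) - U)"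
    proof
      fix y assume "y \<in> ey `` A - f ` U"
      then obtain a where a: "a \<in> A" "(a, y) \<in> ey" "y \<notin> f ` U" by blast
      have sa: "s a \<in> X" "f (s a) = a" using a AY assms(7,8) by auto
      have h: "ey `` {f (s a)} \<subseteq> f ` (ex `` {s a})" using ex(2) sa(1) by blast
      have "y \<in> ey `` {f (s a)}" using a(2) sa(2) by simp
      then have "y \<in> f ` (ex `` {s a})" using h by (rule subsetD[rotated])
      then obtain x where "x \<in> ex `` {s a}" "y = f x" by blast
      thus "y \<in> f ` (ex `` (s ` A) - U)" using a by blast
    qed
    moreover have "bounded_in Y EntY (f ` (ex `` (s ` A) - U))"
      using bnd_image[OF assms(5,4)] UV(3) ex(1) unfolding asymp_nbhd_def by blast
    ultimately show "bounded_in Y EntY (ey `` A - f ` U)" by (rule bnd_mono[rotated])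
  qed
  have n2: "asymp_nbhd Y EntY (Y - f ` U) B"
    unfolding asymp_nbhd_def
  proof
    fix ey assume ey: "ey \<in> EntY"
    obtain ey' where ey': "ey' \<in> EntY" "converse ey \<subseteq> ey'" using ball_conv[OF assms(2) ey] by blast
    obtain ex where ex: "ex \<in> EntX" "\<forall>x\<in>X. ey' `` {f x} \<subseteq> f ` (ex `` {x})"
      using assms(6) ey' unfolding open_map_def by blast
    obtain ex2 where ex2: "ex2 \<in> EntX" "converse ex \<subseteq> ex2" using ball_conv[OF assms(1) ex(1)] by blast
    have "ey `` B - (Y - f ` U) \<subseteq> f ` (ex2 `` B' - V)"
    proof
      fix y assume y: "y \<in> ey `` B - (Y - f ` U)"
      then obtain b where b: "b \<in> B" "(b, y) \<in> ey" by blast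
      have "y \<in> Y" using b(2) ball_sub[OF assms(2) ey] by blast
      hence "y \<in> f ` U" using y by blast
      then obtain u where u: "u \<in> U" "y = f u" by blast
      note bu = b u
      have uX: "u \<in> X" using bu UV by blast
      have "b \<in> ey' `` {f u}" using bu ey' by blast
      then obtain x where x: "x \<in> ex `` {u}" "b = f x" using ex(2) uX by blast
      have "x \<in> X" using x ball_sub[OF assms(1) ex(1)] by blast
      hence "x \<in> B'" using x bu unfolding B'_def by blast
      moreover have "(x, u) \<in> ex2" using x ex2 by blast
      moreover have "u \<notin> V" using bu UV by blast
      ultimately show "y \<in> f ` (ex2 `` B' - V)" using bu by blast
    qed
    moreover have "bounded_in Y EntY (f ` (ex2 `` B' - V))"
      using bnd_image[OF assms(5,4)] UV(4) ex2(1) unfolding asymp_nbhd_def by blast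
    ultimately show "bounded_in Y EntY (ey `` B - (Y - f ` U))" by (rule bnd_mono[rotated])
  qed
  show "\<exists>U V. U \<subseteq> Y \<and> V \<subseteq> Y \<and> asymp_nbhd Y EntY U A \<and> asymp_nbhd Y EntY V B \<and> U \<inter> V = {}"
  proof (intro exI conjI)
    show "f ` U \<subseteq> Y" using UV(1) assms(4) by auto
  qed (use n1 n2 in auto)
qed

end
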